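(* Let $k_0<0$, $0<L\leq\pi$, let $D\subset(0,L)$ be a set of full Lebesgue measure, and let $w:D\to\mathbb{R}$ satisfy: (i) $w$ is strictly decreasing on $D$: for $t_1,t_2\in D$ with $t_1<t_2$, $w(t_1)>w(t_2)$; (ii) for every $t_0\in D$, $\limsup_{D\ni t\to t_0^+}\frac{w(t)-w(t_0)}{t-t_0}\leq-1-(w(t_0))^2$; (iii) $w(t)\leq\frac{\sqrt{-k_0}\cosh(\sqrt{-k_0}t)}{\sinh(\sqrt{-k_0}t)}$ for $t\in D$ close to $0$. Then $w(t)\leq\cot t$ for every $t\in D$. *)

theory Defs
  imports "HOL-Analysis.Analysis"
begin

end

theory Submission
  imports Defs
begin

lemma dense_D:
  fixes D :: "real set" and L a b :: real
  assumes D_sub: "D \<subseteq> {0<..<L}" and D_full: "{0<..<L} - D \<in> null_sets lebesgue"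
    and "0 \<le> a" "a < b" "b \<le> L"
  shows "\<exists>x\<in>D. a < x \<and> x < b"
proof (rule ccontr)
  assume "\<not> ?thesis"
  then have "{a<..<b} \<subseteq> {0<..<L} - D" using assms by auto
  then have "negligible {a<..<b}"
    using D_full negligible_iff_null_sets negligible_subset by blast
  then have "negligible (box a b)" by simp
  then show False using negligible_interval(2)[of a b] \<open>a<b\<close> by (simp add: box_real)
qed

lemma local_slope:
  fixes w :: "real \<Rightarrow> real" and D :: "real set" and x e :: real
  assumes riccati: "Limsup (at x within (D \<inter> {x<..})) (\<lambda>t. ereal ((w t - w x) / (t - x))) \<le> ereal (-1 - (w x)\<^sup>2)"
    and e: "e > 0"
  shows "\<exists>\<eta>>0. \<forall>y\<in>D. x < y \<and> y < x + \<eta> \<longrightarrow> arctan (w x) - arctan (w y) \<ge> (1 - e) * (y - x)"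
proof -
  define a where "a = (1 + (w x)\<^sup>2) * (1 - e/2)"
  have pos: "1 + (w x)\<^sup>2 > 0" by (simp add: add_pos_nonneg)
  have "0 \<le> e*(w x)\<^sup>2" using e by simp
  then have "0 < e/2 + e*(w x)\<^sup>2/2" using e by linarith
  then have "-1 - (w x)\<^sup>2 < - a" unfolding a_def by (simp add: algebra_simps)
  then have "Limsup (at x within (D \<inter> {x<..})) (\<lambda>t. ereal ((w t - w x) / (t - x))) < ereal (-a)"
    using riccati by (meson ereal_less_eq(3) le_less_trans less_eq_real_def not_le)
  then have ev: "eventually (\<lambda>t. ereal ((w t - w x)/(t-x)) < ereal (-a)) (at x within (D \<inter> {x<..}))"
    by (rule Limsup_lessD)
  then obtain d1 where d1: "d1 > 0" "\<And>y. y \<in> D \<inter> {x<..} \<Longrightarrow> y \<noteq> x \<Longrightarrow> dist y x < d1 \<Longrightarrow> (w y - w x)/(y-x) < -a"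
    unfolding eventually_at by auto
  define F where "F h = arctan (w x - a * h)" for h
  have "(F has_field_derivative (inverse (1 + (w x - a*0)\<^sup>2) * (- a))) (at 0)"
    unfolding F_def by (auto intro!: derivative_eq_intros)
  moreover have "inverse (1 + (w x - a*0)\<^sup>2) * (- a) = -(1 - e/2)"
    using pos unfolding a_def by (simp add: field_simps)
  ultimately have "(F has_field_derivative (-(1 - e/2))) (at 0)" by simp
  then have "((\<lambda>h. (F (0+h) - F 0)/h) \<longlongrightarrow> -(1-e/2)) (at 0)" by (simp add: DERIV_def)
  then have "eventually (\<lambda>h. (F (0+h) - F 0)/h < -(1-e)) (at 0)"
    by (rule order_tendstoD) (use e in simp)
  then obtain d2 where d2: "d2>0" "\<And>h. h \<noteq> 0 \<Longrightarrow> dist h 0 < d2 \<Longrightarrow> (F (0+h) - F 0)/h < -(1-e)"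
    unfolding eventually_at by auto
  show ?thesis
  proof (intro exI[of _ "min d1 d2"] conjI ballI impI)
    show "min d1 d2 > 0" using d1 d2 by simp
    fix y assume y: "y \<in> D" "x < y \<and> y < x + min d1 d2"
    have yx: "0 < y - x" using y by simp
    have q: "(w y - w x)/(y-x) < -a" using d1(2)[of y] y by (auto simp: dist_real_def)
    then have "w y - w x < -a * (y-x)" using yx by (simp add: pos_divide_less_eq)
    then have "w y < w x - a*(y-x)" by (simp add: algebra_simps)
    then have A1: "arctan (w y) < F (y - x)" by (simp add: F_def arctan_less_iff)
    have "(F (0 + (y-x)) - F 0)/(y-x) < -(1-e)" using d2(2)[of "y-x"] y by (auto simp: dist_real_def)
    then have "F (y-x) - F 0 < -(1-e)*(y-x)" using yx by (simp add: pos_divide_less_eq)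
    moreover have "F 0 = arctan (w x)" by (simp add: F_def)
    ultimately show "arctan (w x) - arctan (w y) \<ge> (1-e)*(y-x)" using A1 by linarith
  qed
qed


lemma comparison:
  fixes D :: "real set" and w :: "real \<Rightarrow> real" and L s t e :: real
  assumes D_sub: "D \<subseteq> {0<..<L}" and D_full: "{0<..<L} - D \<in> null_sets lebesgue"
    and decr: "\<And>t1 t2. t1 \<in> D \<Longrightarrow> t2 \<in> D \<Longrightarrow> t1 < t2 \<Longrightarrow> w t1 > w t2"
    and loc: "\<And>x e. x \<in> D \<Longrightarrow> e > 0 \<Longrightarrow> \<exists>\<eta>>0. \<forall>y\<in>D. x < y \<and> y < x + \<eta> \<longrightarrow> arctan (w x) - arctan (w y) \<ge> (1 - e) * (y - x)"
    and st: "s \<in> D" "t \<in> D" "s < t" and e: "0 < e" "e < 1"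
  shows "arctan (w s) - arctan (w t) \<ge> (1-e)* (t-s) - e"
proof -
  define A where "A x = arctan (w x)" for x
  have Amono: "\<And>x y. x \<in> D \<Longrightarrow> y \<in> D \<Longrightarrow> x \<le> y \<Longrightarrow> A y \<le> A x"
  proof -
    fix x y assume "x \<in> D" "y \<in> D" "x \<le> y"
    then show "A y \<le> A x" unfolding A_def
      using arctan_monotone[OF decr[of x y]] by (cases "x = y") auto
  qed
  have s0: "0 < s" and tL: "t < L" using st D_sub by auto
  define N where "N = {0<..<L} - D"
  have N0: "N \<in> null_sets lebesgue" using D_full N_def by auto
  have N: "N \<in> sets lebesgue" using N0 by auto
  obtain T where T: "open T" "N \<subseteq> T" "T - N \<in> lmeasurable" "emeasure lebesgue (T - N) < ennreal e"
    using sets_lebesgue_outer_open[OF N e(1)] by blast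
  define h where "h x = measure lebesgue (T \<inter> {s..x})" for x
  have Tleb: "T \<in> sets lebesgue" using T(1) by simp
  have meas: "\<And>x. T \<inter> {s..x} \<in> lmeasurable"
    by (rule bounded_set_imp_lmeasurable) (auto intro: bounded_Int simp: Tleb)
  have hmono: "\<And>x y. x \<le> y \<Longrightarrow> h x \<le> h y"
  proof -
    fix x y :: real assume "x \<le> y"
    then have "T \<inter> {s..x} \<subseteq> T \<inter> {s..y}" by auto
    then show "h x \<le> h y" unfolding h_def
      by (rule measure_mono_fmeasurable) (use meas in auto)
  qed
  have hnn: "\<And>x. h x \<ge> 0" by (simp add: h_def)
  have hadd: "\<And>c y. s \<le> c \<Longrightarrow> c \<le> y \<Longrightarrow> {c..y} \<subseteq> T \<Longrightarrow> h y = h c + (y - c)"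
  proof -
    fix c y :: real assume cy: "s \<le> c" "c \<le> y" "{c..y} \<subseteq> T"
    have eq: "T \<inter> {s..y} = (T \<inter> {s..c}) \<union> {c<..y}" using cy by auto
    have "measure lebesgue ((T \<inter> {s..c}) \<union> {c<..y}) = measure lebesgue (T \<inter> {s..c}) + measure lebesgue {c<..y}"
    proof (rule measure_Union)
      have "{c<..y} \<in> lmeasurable" by (rule bounded_set_imp_lmeasurable) auto
      then show "emeasure lebesgue {c<..y} \<noteq> \<infinity>" by (auto simp: fmeasurable_def)
      show "emeasure lebesgue (T \<inter> {s..c}) \<noteq> \<infinity>" using meas[of c] by (auto simp: fmeasurable_def)
      show "T \<inter> {s..c} \<in> sets lebesgue" using meas[of c] by (simp add: fmeasurable_def)
      show "{c<..y} \<in> sets lebesgue" by simp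
      show "T \<inter> {s..c} \<inter> {c<..y} = {}" by auto
    qed
    then show "h y = h c + (y - c)" unfolding h_def using eq cy by simp
  qed
  have ht: "h t < e"
  proof -
    have sub: "T \<inter> {s..t} \<subseteq> (T - N) \<union> N" by auto
    have NF: "N \<in> fmeasurable lebesgue" using N0 by (auto simp: fmeasurable_def null_sets_def)
    have "h t \<le> measure lebesgue ((T-N) \<union> N)" unfolding h_def
      by (rule measure_mono_fmeasurable[OF sub]) (use meas[of t] fmeasurable.Un[OF T(3) NF] in auto)
    also have "\<dots> = measure lebesgue (T - N)" by (rule measure_Un_null_set) (use T(3) N0 in auto)
    also have "\<dots> < e"
    proof -
      have "emeasure lebesgue (T - N) = ennreal (measure lebesgue (T - N))"
        by (rule emeasure_eq_measure2[OF T(3)])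
      then have "ennreal (measure lebesgue (T - N)) < ennreal e" using T(4) by simp
      then show ?thesis by (metis ennreal_less_iff measure_nonneg)
    qed
    finally show ?thesis .
  qed
  define P where "P x \<longleftrightarrow> (\<forall>y\<in>D. s \<le> y \<longrightarrow> y \<le> x \<longrightarrow> A s - A y + h y \<ge> (1-e)*(y-s))" for x
  define K where "K = {x. s \<le> x \<and> x \<le> t \<and> P x}"
  have Ps: "P s" unfolding P_def using hnn by auto
  have sK: "s \<in> K" using Ps st unfolding K_def by auto
  have Kne: "K \<noteq> {}" using sK by auto
  have bddK: "bdd_above K" unfolding K_def by (intro bdd_aboveI[of _ t]) auto
  define c where "c = Sup K"
  have sc: "s \<le> c" unfolding c_def using sK bddK by (rule cSup_upper)
  have ct: "c \<le> t" unfolding c_def using Kne by (rule cSup_least) (auto simp: K_def)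
  have below: "\<And>z. z \<in> D \<Longrightarrow> s \<le> z \<Longrightarrow> z < c \<Longrightarrow> (1-e)*(z-s) \<le> A s - A z + h z"
  proof -
    fix z assume z: "z \<in> D" "s \<le> z" "z < c"
    then obtain x where "x \<in> K" "z < x" using less_cSup_iff[OF Kne bddK] c_def by auto
    then show "(1-e)*(z-s) \<le> A s - A z + h z" using z unfolding K_def P_def by auto
  qed
  have Pc: "P c" unfolding P_def
  proof (intro ballI impI)
    fix y assume y: "y \<in> D" "s \<le> y" "y \<le> c"
    show "(1-e)*(y-s) \<le> A s - A y + h y"
    proof (cases "y < c")
      case True
      then show ?thesis using below y by blast
    next
      case False
      then have yc: "y = c" using y by simp
      show ?thesis
      proof (cases "c = s")
        case True then show ?thesis using yc hnn by simp
      next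
        case False
        then have "s < c" using sc by simp
        show ?thesis
        proof (rule ccontr)
          assume neg: "\<not> ?thesis"
          define r where "r = A s - A y + h y"
          have "r < (1-e)*(c-s)" using neg yc r_def by simp
          then have "r/(1-e) < c - s" using e by (simp add: pos_divide_less_eq mult.commute)
          then have lt: "max s (s + r/(1-e)) < c" using \<open>s < c\<close> by simp
          obtain z where z: "z \<in> D" "max s (s + r/(1-e)) < z" "z < c"
          proof -
            have "0 \<le> max s (s + r/(1-e))" using s0 by simp
            moreover have "c \<le> L" using ct tL by simp
            ultimately show ?thesis using dense_D[OF D_sub D_full _ lt] that by blast
          qed
          have "(1-e)*(z-s) \<le> A s - A z + h z" using below z by simp
          moreover have "A y \<le> A z" using Amono z y yc by simp
          moreover have "h z \<le> h y" using hmono z yc by simp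
          moreover have "r < (1-e)*(z-s)"
          proof -
            have "r/(1-e) < z - s" using z by simp
            then show ?thesis using e by (simp add: pos_divide_less_eq mult.commute)
          qed
          ultimately show False unfolding r_def by linarith
        qed
      qed
    qed
  qed
  have "c = t"
  proof (rule ccontr)
    assume "c \<noteq> t" then have ct': "c < t" using ct by simp
    have "\<exists>r>0. P (c + r) \<and> c + r \<le> t"
    proof (cases "c \<in> D")
      case True
      obtain \<eta> where eta: "\<eta> > 0" "\<forall>y\<in>D. c < y \<and> y < c + \<eta> \<longrightarrow> (1-e)*(y-c) \<le> A c - A y"
        using loc[OF True e(1)] unfolding A_def by blast
      define r where "r = min (\<eta>/2) (t - c)"
      have "P (c + r)" unfolding P_def
      proof (intro ballI impI)
        fix y assume y: "y\<in>D" "s \<le> y" "y \<le> c + r"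
        show "(1-e)*(y-s) \<le> A s - A y + h y"
        proof (cases "y \<le> c")
          case True thus ?thesis using Pc y unfolding P_def by blast
        next
          case False
          have "(1-e)*(y-c) \<le> A c - A y" using eta y False r_def by auto
          moreover have "(1-e)*(c-s) \<le> A s - A c + h c" using Pc True sc unfolding P_def by blast
          moreover have "h c \<le> h y" using False hmono by simp
          moreover have "(1-e)*(y-s) = (1-e)*(y-c) + (1-e)*(c-s)" by algebra
          ultimately show ?thesis by linarith
        qed
      qed
      then show ?thesis using r_def eta ct' by (intro exI[of _ r]) auto
    next
      case False
      have "c \<in> N" using False N_def sc ct' s0 tL by auto
      then have "c \<in> T" using T by auto
      then obtain r0 where r0: "r0 > 0" "ball c r0 \<subseteq> T" using T(1) open_contains_ball by blast
      have "s < c" using False st(1) sc by (cases "s = c") auto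
      define r where "r = min (r0/2) (t - c)"
      have "P (c + r)" unfolding P_def
      proof (intro ballI impI)
        fix y assume y: "y\<in>D" "s \<le> y" "y \<le> c + r"
        show "(1-e)*(y-s) \<le> A s - A y + h y"
        proof (cases "y \<le> c")
          case True thus ?thesis using Pc y unfolding P_def by blast
        next
          case False
          have sub: "{c..y} \<subseteq> T"
          proof
            fix z assume "z \<in> {c..y}"
            then have "z \<in> ball c r0" using y r_def r0 by (auto simp: dist_real_def)
            then show "z \<in> T" using r0 by auto
          qed
          have hy: "h y = h c + (y - c)" using hadd[OF sc _ sub] False by simp
          have lt: "max s (c - e*(y-c)) < c" using \<open>s < c\<close> False e by simp
          obtain z where z: "z \<in> D" "max s (c - e*(y-c)) < z" "z < c"
          proof -
            have "0 \<le> max s (c - e*(y-c))" using s0 by simp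
            moreover have "c \<le> L" using ct tL by simp
            ultimately show ?thesis using dense_D[OF D_sub D_full _ lt] that by blast
          qed
          have "(1-e)*(z-s) \<le> A s - A z + h z" using below z by simp
          moreover have "A y \<le> A z" using Amono z y False by simp
          moreover have "h z \<le> h c" using hmono z by simp
          moreover have "(1-e)*(y-s) \<le> (1-e)*(z-s) + (y-c)"
          proof -
            have "y - z \<le> (y-c) + e*(y-c)" using z by simp
            then have "(1-e)*(y-z) \<le> (1-e)*((y-c) + e*(y-c))" using e by (intro mult_left_mono) auto
            also have "\<dots> = (y-c) - e*e*(y-c)" by algebra
            also have "\<dots> \<le> y - c" using False by simp
            finally show ?thesis by (simp add: algebra_simps)
          qed
          ultimately show ?thesis using hy by linarith
        qed
      qed
      then show ?thesis using r_def r0 ct' by (intro exI[of _ r]) auto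
    qed
    then obtain r where r: "r > 0" "P (c+r)" "c + r \<le> t" by blast
    then have "c + r \<in> K" using sc K_def by auto
    then have "c + r \<le> c" using cSup_upper bddK c_def by blast
    then show False using r by simp
  qed
  then have "P t" using Pc by simp
  then have "A s - A t + h t \<ge> (1-e)* (t-s)" using st unfolding P_def by auto
  then show ?thesis using ht unfolding A_def by linarith
qed

theorem mainTheorem12:
  fixes k0 L :: real and D :: "real set" and w :: "real \<Rightarrow> real"
  assumes k0: "k0 < 0"
    and L: "0 < L" "L \<le> pi"
    and D_sub: "D \<subseteq> {0<..<L}"
    and D_full: "{0<..<L} - D \<in> null_sets lebesgue"
    and decr: "\<And>t1 t2. t1 \<in> D \<Longrightarrow> t2 \<in> D \<Longrightarrow> t1 < t2 \<Longrightarrow> w t1 > w t2"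
    and riccati: "\<And>t0. t0 \<in> D \<Longrightarrow>
       Limsup (at t0 within (D \<inter> {t0<..})) (\<lambda>t. ereal ((w t - w t0) / (t - t0)))
         \<le> ereal (-1 - (w t0)\<^sup>2)"
    and near0: "\<exists>\<delta>>0. \<forall>t\<in>D. t < \<delta> \<longrightarrow>
       w t \<le> sqrt (-k0) * cosh (sqrt (-k0) * t) / sinh (sqrt (-k0) * t)"
  shows "\<forall>t\<in>D. w t \<le> cot t"
proof
  fix t assume t: "t \<in> D"
  have loc: "\<And>x e. x \<in> D \<Longrightarrow> e > 0 \<Longrightarrow> \<exists>\<eta>>0. \<forall>y\<in>D. x < y \<and> y < x + \<eta> \<longrightarrow> arctan (w x) - arctan (w y) \<ge> (1 - e) * (y - x)"
    using local_slope[OF riccati] by blast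
  have t0: "0 < t" "t < L" using t D_sub by auto
  have key: "arctan (w t) \<le> pi/2 - t"
  proof (rule ccontr)
    assume nt: "\<not> arctan (w t) \<le> pi/2 - t"
    define d where "d = arctan (w t) - (pi/2 - t)"
    have d: "d > 0" using nt d_def by simp
    define e where "e = min (1/2) (min (t/2) (d/(2*(t+2))))"
    have e1: "0 < e" using d t0 by (simp add: e_def)
    have e2: "e < 1" by (simp add: e_def)
    have e3: "e \<le> t/2" unfolding e_def by (rule order_trans[OF min.cobounded2 min.cobounded1])
    note e = e1 e2 e3
    have "e \<le> d/(2*(t+2))" by (simp add: e_def)
    then have ed: "e*(t+2) \<le> d/2" using t0 by (simp add: pos_le_divide_eq algebra_simps)
    obtain s where s: "s \<in> D" "0 < s" "s < e"
    proof -
      have "e < L" using e t0 by simp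
      then show ?thesis using dense_D[OF D_sub D_full, of 0 e] e that by auto
    qed
    have "s < t" using s e t0 by simp
    have "(1-e)* (t-s) - e \<le> arctan (w s) - arctan (w t)"
      by (rule comparison[OF D_sub D_full decr loc s(1) t \<open>s < t\<close> e(1) e(2)]) auto
    moreover have "arctan (w s) < pi/2" by (rule arctan_ubound)
    moreover have "(1-e)* (t-s) - e \<ge> t - e*(t+2)"
    proof -
      have "0 \<le> e * s" using s e by simp
      moreover have "(1-e)* (t-s) - e = t - s - e*t + e * s - e" by algebra
      moreover have "e*(t+2) = e*t + 2*e" by algebra
      ultimately show ?thesis using s by linarith
    qed
    ultimately show False using ed d d_def by linarith
  qed
  have "tan (arctan (w t)) \<le> tan (pi/2 - t)"
    by (rule tan_mono_le) (use arctan_bounded[of "w t"] t0 L key in auto)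
  then show "w t \<le> cot t" by (simp add: tan_cot' arctan)
qed

end
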